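(* Let $\mathfrak X=(X,\xrightarrow{F},\le)$ be a functional WSTS and let $\mathfrak S=\widehat{\mathfrak X}$ be its completion. For every state $s_0\in X$, $Cover_{\mathfrak X}(s_0)=\eta_X^{-1}(Cover_{\mathfrak S}(\eta_X(s_0)))=\eta_X^{-1}(\downarrow Clover_{\mathfrak S}(\eta_X(s_0)))$.
   Context: A functional WSTS $(X,\xrightarrow{F},\le)$: $(X,\le)$ a well partial order, $F$ a finite set of partial monotonic maps (upward-closed domain, monotone on it), $x\to f(x)$ for $x\in\operatorname{dom}f$. $Post^*$: reachability; $Cover(x)=\downarrow Post^*(\downarrow x)$. Completion: an ideal is a nonempty downward-closed directed subset of $X$; $\widehat X=\mathrm{Idl}(X)$ ordered by inclusion (a continuous dcpo, directed lubs being unions); $\eta_X(x)=\downarrow x$. For $f\in F$, $\widehat f$ has domain $\{C\mid C\cap\operatorname{dom}f\neq\emptyset\}$ and $\widehat f(C)=\downarrow f\langle C\cap\operatorname{dom}f\rangle$. $\widehat{\mathfrak X}=(\widehat X,\xrightarrow{\{\widehat f\}},\subseteq)$. In a dcpo, $\operatorname{Lub}(E)=\{\bigvee D\mid D\subseteq E\text{ directed}\}$, and $Clover_{\mathfrak S}(s)=\operatorname{Max}\operatorname{Lub}(Cover_{\mathfrak S}(s))$ (set of maximal elements). *)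

theory Defs
  imports Main
begin

definition wpo :: "'a set \<Rightarrow> ('a \<Rightarrow> 'a \<Rightarrow> bool) \<Rightarrow> bool" where
  "wpo X le \<longleftrightarrow>
     (\<forall>x\<in>X. le x x) \<and>
     (\<forall>x\<in>X. \<forall>y\<in>X. \<forall>z\<in>X. le x y \<longrightarrow> le y z \<longrightarrow> le x z) \<and>
     (\<forall>x\<in>X. \<forall>y\<in>X. le x y \<longrightarrow> le y x \<longrightarrow> x = y) \<and>
     (\<forall>g::nat \<Rightarrow> 'a. (\<forall>i. g i \<in> X) \<longrightarrow> (\<exists>i j. i < j \<and> le (g i) (g j)))"

definition down_set :: "'s set \<Rightarrow> ('s \<Rightarrow> 's \<Rightarrow> bool) \<Rightarrow> 's set \<Rightarrow> 's set" where
  "down_set S le A = {x \<in> S. \<exists>a\<in>A. le x a}"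

definition directed_on :: "('s \<Rightarrow> 's \<Rightarrow> bool) \<Rightarrow> 's set \<Rightarrow> bool" where
  "directed_on le D \<longleftrightarrow> D \<noteq> {} \<and> (\<forall>a\<in>D. \<forall>b\<in>D. \<exists>c\<in>D. le a c \<and> le b c)"

definition is_lub :: "'s set \<Rightarrow> ('s \<Rightarrow> 's \<Rightarrow> bool) \<Rightarrow> 's set \<Rightarrow> 's \<Rightarrow> bool" where
  "is_lub S le D u \<longleftrightarrow> u \<in> S \<and> (\<forall>d\<in>D. le d u) \<and>
      (\<forall>v\<in>S. (\<forall>d\<in>D. le d v) \<longrightarrow> le u v)"

definition Lub :: "'s set \<Rightarrow> ('s \<Rightarrow> 's \<Rightarrow> bool) \<Rightarrow> 's set \<Rightarrow> 's set" where
  "Lub S le E = {u. \<exists>D. D \<subseteq> E \<and> directed_on le D \<and> is_lub S le D u}"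

definition Max_el :: "('s \<Rightarrow> 's \<Rightarrow> bool) \<Rightarrow> 's set \<Rightarrow> 's set" where
  "Max_el le A = {a \<in> A. \<forall>b\<in>A. le a b \<longrightarrow> b = a}"

definition post_star :: "('s \<Rightarrow> 's \<Rightarrow> bool) \<Rightarrow> 's set \<Rightarrow> 's set" where
  "post_star step A = {y. \<exists>x\<in>A. step\<^sup>*\<^sup>* x y}"

definition cover :: "'s set \<Rightarrow> ('s \<Rightarrow> 's \<Rightarrow> bool) \<Rightarrow> ('s \<Rightarrow> 's \<Rightarrow> bool) \<Rightarrow> 's \<Rightarrow> 's set" where
  "cover S le step s = down_set S le (post_star step (down_set S le {s}))"

definition clover :: "'s set \<Rightarrow> ('s \<Rightarrow> 's \<Rightarrow> bool) \<Rightarrow> ('s \<Rightarrow> 's \<Rightarrow> bool) \<Rightarrow> 's \<Rightarrow> 's set" where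
  "clover S le step s = Max_el le (Lub S le (cover S le step s))"

text \<open>Partial maps are modelled as 'a => 'a option; the domain is taken inside X.\<close>
definition pdom :: "'a set \<Rightarrow> ('a \<Rightarrow> 'a option) \<Rightarrow> 'a set" where
  "pdom X f = {x \<in> X. f x \<noteq> None}"

definition pimage :: "('a \<Rightarrow> 'a option) \<Rightarrow> 'a set \<Rightarrow> 'a set" where
  "pimage f A = {y. \<exists>x\<in>A. f x = Some y}"

definition partial_monotone :: "'a set \<Rightarrow> ('a \<Rightarrow> 'a \<Rightarrow> bool) \<Rightarrow> ('a \<Rightarrow> 'a option) \<Rightarrow> bool" where
  "partial_monotone X le f \<longleftrightarrow>
     (\<forall>x\<in>pdom X f. the (f x) \<in> X) \<and>
     (\<forall>x\<in>pdom X f. \<forall>y\<in>X. le x y \<longrightarrow> y \<in> pdom X f) \<and>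
     (\<forall>x\<in>pdom X f. \<forall>y\<in>pdom X f. le x y \<longrightarrow> le (the (f x)) (the (f y)))"

definition functional_wsts :: "'a set \<Rightarrow> ('a \<Rightarrow> 'a \<Rightarrow> bool) \<Rightarrow> ('a \<Rightarrow> 'a option) set \<Rightarrow> bool" where
  "functional_wsts X le F \<longleftrightarrow> wpo X le \<and> finite F \<and> (\<forall>f\<in>F. partial_monotone X le f)"

definition fstep :: "'a set \<Rightarrow> ('a \<Rightarrow> 'a option) set \<Rightarrow> 'a \<Rightarrow> 'a \<Rightarrow> bool" where
  "fstep X F x y \<longleftrightarrow> x \<in> X \<and> (\<exists>f\<in>F. f x = Some y)"

definition ideal :: "'a set \<Rightarrow> ('a \<Rightarrow> 'a \<Rightarrow> bool) \<Rightarrow> 'a set \<Rightarrow> bool" where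
  "ideal X le I \<longleftrightarrow> I \<subseteq> X \<and> I \<noteq> {} \<and>
     (\<forall>x\<in>I. \<forall>y\<in>X. le y x \<longrightarrow> y \<in> I) \<and>
     (\<forall>x\<in>I. \<forall>y\<in>I. \<exists>z\<in>I. le x z \<and> le y z)"

definition Idl :: "'a set \<Rightarrow> ('a \<Rightarrow> 'a \<Rightarrow> bool) \<Rightarrow> 'a set set" where
  "Idl X le = {I. ideal X le I}"

definition eta :: "'a set \<Rightarrow> ('a \<Rightarrow> 'a \<Rightarrow> bool) \<Rightarrow> 'a \<Rightarrow> 'a set" where
  "eta X le x = down_set X le {x}"

definition hat_step :: "'a set \<Rightarrow> ('a \<Rightarrow> 'a \<Rightarrow> bool) \<Rightarrow> ('a \<Rightarrow> 'a option) set \<Rightarrow> 'a set \<Rightarrow> 'a set \<Rightarrow> bool" where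
  "hat_step X le F C D \<longleftrightarrow> C \<in> Idl X le \<and>
     (\<exists>f\<in>F. C \<inter> pdom X f \<noteq> {} \<and> D = down_set X le (pimage f (C \<inter> pdom X f)))"

end

theory Submission
  imports Defs
begin

locale fw =
  fixes X :: "'a set" and le :: "'a \<Rightarrow> 'a \<Rightarrow> bool" and F :: "('a \<Rightarrow> 'a option) set"
  assumes rfl: "\<And>x. x \<in> X \<Longrightarrow> le x x"
    and trn: "\<And>x y z. x \<in> X \<Longrightarrow> y \<in> X \<Longrightarrow> z \<in> X \<Longrightarrow> le x y \<Longrightarrow> le y z \<Longrightarrow> le x z"
    and pm: "\<And>f. f \<in> F \<Longrightarrow> partial_monotone X le f"

context fw
begin

lemma pm_img: "f \<in> F \<Longrightarrow> c \<in> X \<Longrightarrow> f c = Some a \<Longrightarrow> a \<in> X"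
  using pm unfolding partial_monotone_def pdom_def by force

lemma pm_up: "f \<in> F \<Longrightarrow> c \<in> X \<Longrightarrow> f c \<noteq> None \<Longrightarrow> d \<in> X \<Longrightarrow> le c d \<Longrightarrow> f d \<noteq> None"
  using pm unfolding partial_monotone_def pdom_def by blast

lemma pm_mono: "f \<in> F \<Longrightarrow> c \<in> X \<Longrightarrow> f c = Some a \<Longrightarrow> d \<in> X \<Longrightarrow> f d = Some b \<Longrightarrow> le c d \<Longrightarrow> le a b"
  using pm unfolding partial_monotone_def pdom_def by force

lemma eta_ideal: "x \<in> X \<Longrightarrow> ideal X le (down_set X le {x})"
  unfolding ideal_def down_set_def using rfl trn by blast

lemma ideal_sub: "ideal X le I \<Longrightarrow> I \<subseteq> X"
  unfolding ideal_def by blast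
lemma ideal_down: "ideal X le I \<Longrightarrow> x \<in> I \<Longrightarrow> y \<in> X \<Longrightarrow> le y x \<Longrightarrow> y \<in> I"
  unfolding ideal_def by blast

lemma ideal_dir: "ideal X le I \<Longrightarrow> x \<in> I \<Longrightarrow> y \<in> I \<Longrightarrow> \<exists>z\<in>I. le x z \<and> le y z"
  unfolding ideal_def by blast

lemma hat_ideal:
  assumes "hat_step X le F C D" shows "ideal X le D"
proof -
  obtain f where f: "f \<in> F" and C: "ideal X le C" and ne: "C \<inter> pdom X f \<noteq> {}"
    and D: "D = down_set X le (pimage f (C \<inter> pdom X f))"
    using assms unfolding hat_step_def Idl_def by auto
  have CX: "C \<subseteq> X" using ideal_sub[OF C] .
  have Dm: "y \<in> D \<longleftrightarrow> y \<in> X \<and> (\<exists>c a. c \<in> C \<and> f c = Some a \<and> le y a)" for y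
    using CX unfolding D down_set_def pimage_def pdom_def by auto
  have "D \<subseteq> X" using Dm by blast
  moreover have "D \<noteq> {}"
  proof -
    obtain c where c: "c \<in> C" "f c \<noteq> None" using ne by (auto simp: pdom_def)
    then obtain a where a: "f c = Some a" by auto
    have aX: "a \<in> X" using pm_img[OF f] c a CX by auto
    have "a \<in> D" unfolding Dm using aX rfl[OF aX] c(1) a by blast
    thus ?thesis by auto
  qed
  moreover have "\<forall>x\<in>D. \<forall>y\<in>X. le y x \<longrightarrow> y \<in> D"
  proof (intro ballI impI)
    fix x y assume x: "x \<in> D" and y: "y \<in> X" and yx: "le y x"
    obtain c a where "x \<in> X" "c \<in> C" "f c = Some a" "le x a" using x Dm by blast
    moreover have "a \<in> X" using pm_img[OF f] calculation CX by blast
    ultimately have "le y a" using trn[OF y] yx by blast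
    thus "y \<in> D" unfolding Dm using y \<open>c \<in> C\<close> \<open>f c = Some a\<close> by blast
  qed
  moreover have "\<forall>x\<in>D. \<forall>y\<in>D. \<exists>z\<in>D. le x z \<and> le y z"
  proof (intro ballI)
    fix x y assume x: "x \<in> D" and y: "y \<in> D"
    obtain a c1 where xa: "x \<in> X" "c1 \<in> C" "f c1 = Some a" "le x a" using x Dm by blast
    obtain b c2 where yb: "y \<in> X" "c2 \<in> C" "f c2 = Some b" "le y b" using y Dm by blast
    have c1X: "c1 \<in> X" and c2X: "c2 \<in> X" using xa yb CX by auto
    obtain z where z: "z \<in> C" "le c1 z" "le c2 z" using ideal_dir[OF C xa(2) yb(2)] by blast
    have zX: "z \<in> X" using z CX by auto
    have "f z \<noteq> None" using pm_up[OF f c1X _ zX z(2)] xa(3) by auto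
    then obtain w where w: "f z = Some w" by auto
    have wX: "w \<in> X" using pm_img[OF f zX w] .
    have aX: "a \<in> X" using pm_img[OF f c1X xa(3)] .
    have bX: "b \<in> X" using pm_img[OF f c2X yb(3)] .
    have aw: "le a w" using pm_mono[OF f c1X xa(3) zX w z(2)] .
    have bw: "le b w" using pm_mono[OF f c2X yb(3) zX w z(3)] .
    have wD: "w \<in> D" unfolding Dm using wX rfl[OF wX] z(1) w by blast
    show "\<exists>z\<in>D. le x z \<and> le y z"
      using wD trn[OF xa(1) aX wX xa(4) aw] trn[OF yb(1) bX wX yb(4) bw] by blast
  qed
  ultimately show ?thesis unfolding ideal_def by blast
qed

lemma hat_star_ideal: "(hat_step X le F)\<^sup>*\<^sup>* K J \<Longrightarrow> ideal X le K \<Longrightarrow> ideal X le J"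
  by (induction rule: rtranclp_induct) (auto intro: hat_ideal)

lemma reach_X: "(fstep X F)\<^sup>*\<^sup>* z y \<Longrightarrow> z \<in> X \<Longrightarrow> y \<in> X"
  by (induction rule: rtranclp_induct) (auto simp: fstep_def intro: pm_img)

lemma fwd:
  assumes "(fstep X F)\<^sup>*\<^sup>* z y" "ideal X le K" "z \<in> K"
  shows "\<exists>J. (hat_step X le F)\<^sup>*\<^sup>* K J \<and> y \<in> J"
  using assms(1)
proof (induction rule: rtranclp_induct)
  case base thus ?case using assms by auto
next
  case (step y w)
  then obtain J where J: "(hat_step X le F)\<^sup>*\<^sup>* K J" "y \<in> J" by auto
  have Ji: "ideal X le J" using hat_star_ideal[OF J(1) assms(2)] .
  obtain f where f: "f \<in> F" "f y = Some w" and yX: "y \<in> X" using step(2) by (auto simp: fstep_def)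
  have wX: "w \<in> X" using pm_img[OF f(1) yX f(2)] .
  let ?D = "down_set X le (pimage f (J \<inter> pdom X f))"
  have yp: "y \<in> J \<inter> pdom X f" using J yX f unfolding pdom_def by auto
  have "hat_step X le F J ?D" unfolding hat_step_def Idl_def using Ji f yp by blast
  moreover have "w \<in> ?D" unfolding down_set_def pimage_def using wX rfl[OF wX] yp f by blast
  ultimately show ?case using J by (meson rtranclp.rtrancl_into_rtrancl)
qed

lemma bwd:
  assumes "(hat_step X le F)\<^sup>*\<^sup>* K J" "ideal X le K"
  shows "\<forall>y\<in>J. \<exists>z\<in>K. \<exists>y'. (fstep X F)\<^sup>*\<^sup>* z y' \<and> le y y'"
  using assms(1)
proof (induction rule: rtranclp_induct)
  case base thus ?case using ideal_sub[OF assms(2)] rfl by blast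
next
  case (step C D)
  show ?case
  proof
    fix y assume y: "y \<in> D"
    obtain f where f: "f \<in> F" and D: "D = down_set X le (pimage f (C \<inter> pdom X f))"
      using step(2) unfolding hat_step_def by auto
    have Ci: "ideal X le C" using hat_star_ideal[OF step(1) assms(2)] .
    obtain a c where ya: "le y a" "y \<in> X" and c: "c \<in> C" "c \<in> X" "f c = Some a"
      using y D unfolding down_set_def pimage_def pdom_def by blast
    have "\<exists>z\<in>K. \<exists>y'. (fstep X F)\<^sup>*\<^sup>* z y' \<and> le c y'" using step(3) c(1) by (rule bspec)
    then obtain z c' where z: "z \<in> K" "(fstep X F)\<^sup>*\<^sup>* z c'" "le c c'" by blast
    have zX: "z \<in> X" using z ideal_sub[OF assms(2)] by blast
    have c'X: "c' \<in> X" using reach_X[OF z(2) zX] .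
    have "f c' \<noteq> None" using pm_up[OF f c(2) _ c'X z(3)] c by auto
    then obtain a' where a': "f c' = Some a'" by auto
    have "fstep X F c' a'" using c'X f a' by (auto simp: fstep_def)
    hence r: "(fstep X F)\<^sup>*\<^sup>* z a'" using z(2) by (meson rtranclp.rtrancl_into_rtrancl)
    have aa: "le a a'" using pm_mono[OF f c(2) c(3) c'X a' z(3)] .
    have "le y a'" using trn[OF ya(2) pm_img[OF f c(2) c(3)] pm_img[OF f c'X a'] ya(1) aa] .
    thus "\<exists>z\<in>K. \<exists>y'. (fstep X F)\<^sup>*\<^sup>* z y' \<and> le y y'" using r z(1) by blast
  qed
qed


lemma dir_union_ideal:
  assumes dir: "directed_on (\<subseteq>) D" and DI: "D \<subseteq> Idl X le" shows "ideal X le (\<Union>D)"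
proof -
  have id: "\<And>d. d \<in> D \<Longrightarrow> ideal X le d" using DI by (auto simp: Idl_def)
  have "\<Union>D \<subseteq> X" using id ideal_sub by blast
  moreover have "\<Union>D \<noteq> {}"
  proof -
    obtain d where "d \<in> D" using dir unfolding directed_on_def by blast
    moreover have "d \<noteq> {}" using id[OF calculation] unfolding ideal_def by blast
    ultimately show ?thesis by blast
  qed
  moreover have "\<forall>x\<in>\<Union>D. \<forall>y\<in>X. le y x \<longrightarrow> y \<in> \<Union>D"
    using id ideal_down by blast
  moreover have "\<forall>x\<in>\<Union>D. \<forall>y\<in>\<Union>D. \<exists>z\<in>\<Union>D. le x z \<and> le y z"
  proof (intro ballI)
    fix x y assume "x \<in> \<Union>D" "y \<in> \<Union>D"
    then obtain d1 d2 where d: "d1 \<in> D" "d2 \<in> D" "x \<in> d1" "y \<in> d2" by blast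
    then obtain d3 where d3: "d3 \<in> D" "d1 \<subseteq> d3" "d2 \<subseteq> d3"
      using dir unfolding directed_on_def by blast
    obtain z where "z \<in> d3" "le x z" "le y z" using ideal_dir[OF id[OF d3(1)]] d d3 by blast
    thus "\<exists>z\<in>\<Union>D. le x z \<and> le y z" using d3(1) by blast
  qed
  ultimately show ?thesis unfolding ideal_def by blast
qed

lemma eta_in:
  assumes "s0 \<in> X" "x \<in> cover X le (fstep X F) s0"
  shows "eta X le x \<in> cover (Idl X le) (\<subseteq>) (hat_step X le F) (eta X le s0)"
proof -
  obtain y z where x: "x \<in> X" "le x y" and z: "z \<in> X" "le z s0" and r: "(fstep X F)\<^sup>*\<^sup>* z y"
    using assms(2) unfolding cover_def down_set_def post_star_def by blast
  have ez: "ideal X le (eta X le z)" using eta_ideal[OF z(1)] by (simp add: eta_def)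
  have "z \<in> eta X le z" using z rfl unfolding eta_def down_set_def by blast
  then obtain J where J: "(hat_step X le F)\<^sup>*\<^sup>* (eta X le z) J" "y \<in> J" using fwd[OF r ez] by blast
  have Ji: "ideal X le J" using hat_star_ideal[OF J(1) ez] .
  have yX: "y \<in> X" using J(2) ideal_sub[OF Ji] by blast
  have sub: "eta X le x \<subseteq> J"
  proof
    fix w assume "w \<in> eta X le x"
    hence "w \<in> X" "le w x" unfolding eta_def down_set_def by auto
    hence "le w y" using trn x yX by blast
    thus "w \<in> J" using ideal_down[OF Ji J(2) \<open>w \<in> X\<close>] by blast
  qed
  have "eta X le z \<subseteq> eta X le s0" using trn z assms(1) unfolding eta_def down_set_def by blast
  moreover have "eta X le x \<in> Idl X le" using eta_ideal[OF x(1)] by (simp add: eta_def Idl_def)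
  moreover have "eta X le z \<in> Idl X le" using ez by (simp add: Idl_def)
  ultimately show ?thesis using J(1) sub unfolding cover_def down_set_def post_star_def by blast
qed

lemma CS_sub:
  assumes "s0 \<in> X" "I \<in> cover (Idl X le) (\<subseteq>) (hat_step X le F) (eta X le s0)"
  shows "I \<in> Idl X le \<and> I \<subseteq> cover X le (fstep X F) s0"
proof -
  obtain J K where I: "I \<in> Idl X le" "I \<subseteq> J" and K: "K \<in> Idl X le" "K \<subseteq> eta X le s0"
    and r: "(hat_step X le F)\<^sup>*\<^sup>* K J"
    using assms(2) unfolding cover_def down_set_def post_star_def by blast
  have Ki: "ideal X le K" using K by (simp add: Idl_def)
  have "I \<subseteq> cover X le (fstep X F) s0"
  proof
    fix y assume y: "y \<in> I"
    obtain z y' where z: "z \<in> K" "(fstep X F)\<^sup>*\<^sup>* z y'" "le y y'"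
      using bwd[OF r Ki] y I(2) by blast
    have "z \<in> X" "le z s0" using z(1) K(2) unfolding eta_def down_set_def by auto
    moreover have "y \<in> X" using y I(1) ideal_sub unfolding Idl_def by blast
    ultimately show "y \<in> cover X le (fstep X F) s0"
      using z unfolding cover_def down_set_def post_star_def by blast
  qed
  thus ?thesis using I by blast
qed


lemma eta_mono: "x \<in> X \<Longrightarrow> z \<in> X \<Longrightarrow> le x z \<Longrightarrow> eta X le x \<subseteq> eta X le z"
proof
  fix w assume "x \<in> X" "z \<in> X" "le x z" "w \<in> eta X le x"
  hence "w \<in> X" "le w x" unfolding eta_def down_set_def by auto
  hence "le w z" using trn[OF \<open>w \<in> X\<close> \<open>x \<in> X\<close> \<open>z \<in> X\<close>] \<open>le x z\<close> by blast
  thus "w \<in> eta X le z" using \<open>w \<in> X\<close> unfolding eta_def down_set_def by blast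
qed

lemma x_in_eta: "x \<in> X \<Longrightarrow> x \<in> eta X le x"
  using rfl unfolding eta_def down_set_def by blast

lemma eta_Idl: "x \<in> X \<Longrightarrow> eta X le x \<in> Idl X le"
  using eta_ideal by (simp add: eta_def Idl_def)

lemma lub_sub:
  assumes "s0 \<in> X" "M \<in> Lub (Idl X le) (\<subseteq>) (cover (Idl X le) (\<subseteq>) (hat_step X le F) (eta X le s0))"
  shows "M \<in> Idl X le \<and> M \<subseteq> cover X le (fstep X F) s0"
proof -
  obtain D where D: "D \<subseteq> cover (Idl X le) (\<subseteq>) (hat_step X le F) (eta X le s0)"
    "directed_on (\<subseteq>) D" "is_lub (Idl X le) (\<subseteq>) D M"
    using assms(2) unfolding Lub_def by blast
  have DI: "D \<subseteq> Idl X le" and DC: "\<Union>D \<subseteq> cover X le (fstep X F) s0"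
    using D(1) CS_sub[OF assms(1)] by blast+
  have "\<Union>D \<in> Idl X le" using dir_union_ideal[OF D(2) DI] by (simp add: Idl_def)
  hence "M \<subseteq> \<Union>D" using D(3) unfolding is_lub_def by blast
  thus ?thesis using DC D(3) unfolding is_lub_def by blast
qed

lemma lub_in:
  assumes "s0 \<in> X" "ideal X le M" "M \<subseteq> cover X le (fstep X F) s0"
  shows "M \<in> Lub (Idl X le) (\<subseteq>) (cover (Idl X le) (\<subseteq>) (hat_step X le F) (eta X le s0))"
proof -
  let ?D = "eta X le ` M"
  have MX: "M \<subseteq> X" using ideal_sub[OF assms(2)] .
  have "?D \<subseteq> cover (Idl X le) (\<subseteq>) (hat_step X le F) (eta X le s0)"
    using eta_in[OF assms(1)] assms(3) by blast
  moreover have "directed_on (\<subseteq>) ?D"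
    unfolding directed_on_def
  proof (intro conjI ballI)
    show "?D \<noteq> {}" using assms(2) unfolding ideal_def by blast
  next
    fix a b assume "a \<in> ?D" "b \<in> ?D"
    then obtain x y where xy: "x \<in> M" "y \<in> M" "a = eta X le x" "b = eta X le y" by blast
    obtain z where z: "z \<in> M" "le x z" "le y z" using ideal_dir[OF assms(2) xy(1,2)] by blast
    have "x \<in> X" "y \<in> X" "z \<in> X" using xy z MX by auto
    hence "a \<subseteq> eta X le z" "b \<subseteq> eta X le z"
      using eta_mono xy z by auto
    thus "\<exists>c\<in>?D. a \<subseteq> c \<and> b \<subseteq> c" using z(1) by blast
  qed
  moreover have "is_lub (Idl X le) (\<subseteq>) ?D M"
    unfolding is_lub_def
  proof (intro conjI ballI impI)
    show "M \<in> Idl X le" using assms(2) by (simp add: Idl_def)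
  next
    fix d assume "d \<in> ?D"
    then obtain x where x: "x \<in> M" "d = eta X le x" by blast
    show "d \<subseteq> M"
    proof
      fix w assume "w \<in> d"
      hence "w \<in> X" "le w x" using x unfolding eta_def down_set_def by auto
      thus "w \<in> M" using ideal_down[OF assms(2) x(1)] by blast
    qed
  next
    fix v assume "v \<in> Idl X le" "\<forall>d\<in>?D. d \<subseteq> v"
    thus "M \<subseteq> v" using x_in_eta MX by blast
  qed
  ultimately show ?thesis unfolding Lub_def by blast
qed

lemma zorn_max:
  assumes "x \<in> X" "eta X le x \<subseteq> Cv"
  shows "\<exists>M. ideal X le M \<and> M \<subseteq> Cv \<and> eta X le x \<subseteq> M \<and>
            (\<forall>N. ideal X le N \<and> N \<subseteq> Cv \<and> eta X le x \<subseteq> N \<and> M \<subseteq> N \<longrightarrow> N = M)"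
proof -
  let ?A = "{I. ideal X le I \<and> I \<subseteq> Cv \<and> eta X le x \<subseteq> I}"
  have "\<forall>C\<in>chains ?A. \<exists>U\<in>?A. \<forall>Y\<in>C. Y \<subseteq> U"
  proof
    fix C assume C: "C \<in> chains ?A"
    show "\<exists>U\<in>?A. \<forall>Y\<in>C. Y \<subseteq> U"
    proof (cases "C = {}")
      case True
      have "eta X le x \<in> ?A" using eta_ideal[OF assms(1)] assms(2) by (simp add: eta_def)
      thus ?thesis using True by blast
    next
      case False
      have CA: "C \<subseteq> ?A" and ch: "chain\<^sub>\<subseteq> C" using C unfolding chains_def by auto
      have "directed_on (\<subseteq>) C" unfolding directed_on_def
      proof (intro conjI ballI)
        show "C \<noteq> {}" using False .
      next
        fix a b assume ab: "a \<in> C" "b \<in> C"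
        hence "a \<subseteq> b \<or> b \<subseteq> a" using ch unfolding chain_subset_def by blast
        thus "\<exists>c\<in>C. a \<subseteq> c \<and> b \<subseteq> c" using ab by blast
      qed
      moreover have "C \<subseteq> Idl X le" using CA by (auto simp: Idl_def)
      ultimately have "ideal X le (\<Union>C)" by (rule dir_union_ideal)
      moreover have "\<Union>C \<subseteq> Cv" "eta X le x \<subseteq> \<Union>C" using CA False by blast+
      ultimately show ?thesis by blast
    qed
  qed
  from Zorn_Lemma2[OF this] obtain M where M: "M \<in> ?A" "\<forall>N\<in>?A. M \<subseteq> N \<longrightarrow> N = M"
    by (elim bexE)
  have "\<forall>N. ideal X le N \<and> N \<subseteq> Cv \<and> eta X le x \<subseteq> N \<and> M \<subseteq> N \<longrightarrow> N = M"
  proof (intro allI impI)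
    fix N assume "ideal X le N \<and> N \<subseteq> Cv \<and> eta X le x \<subseteq> N \<and> M \<subseteq> N"
    thus "N = M" using M(2) by simp
  qed
  thus ?thesis using M(1) by blast
qed

end

theorem proposition3p9:
  fixes X :: "'a set" and le :: "'a \<Rightarrow> 'a \<Rightarrow> bool" and F :: "('a \<Rightarrow> 'a option) set"
    and s0 :: 'a
  assumes "functional_wsts X le F" and "s0 \<in> X"
  shows "cover X le (fstep X F) s0
           = {x \<in> X. eta X le x \<in> cover (Idl X le) (\<subseteq>) (hat_step X le F) (eta X le s0)}
       \<and> {x \<in> X. eta X le x \<in> cover (Idl X le) (\<subseteq>) (hat_step X le F) (eta X le s0)}
           = {x \<in> X. eta X le x \<in> down_set (Idl X le) (\<subseteq>)
                 (clover (Idl X le) (\<subseteq>) (hat_step X le F) (eta X le s0))}"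
proof -
  have rfl: "\<And>x. x \<in> X \<Longrightarrow> le x x"
    and trn: "\<And>x y z. x \<in> X \<Longrightarrow> y \<in> X \<Longrightarrow> z \<in> X \<Longrightarrow> le x y \<Longrightarrow> le y z \<Longrightarrow> le x z"
    and pm: "\<And>f. f \<in> F \<Longrightarrow> partial_monotone X le f"
    using assms(1) unfolding functional_wsts_def wpo_def by blast+
  interpret fw X le F using rfl trn pm by unfold_locales blast+
  note L = eta_in CS_sub lub_sub lub_in zorn_max x_in_eta eta_Idl
  let ?C = "cover X le (fstep X F) s0"
  let ?CS = "cover (Idl X le) (\<subseteq>) (hat_step X le F) (eta X le s0)"
  have CX: "?C \<subseteq> X" unfolding cover_def down_set_def by blast
  have P1: "?C = {x \<in> X. eta X le x \<in> ?CS}"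
  proof
    show "?C \<subseteq> {x \<in> X. eta X le x \<in> ?CS}" using CX L(1)[OF assms(2)] by blast
    show "{x \<in> X. eta X le x \<in> ?CS} \<subseteq> ?C" using L(2)[OF assms(2)] L(6) by blast
  qed
  have etaC: "x \<in> ?C \<Longrightarrow> eta X le x \<subseteq> ?C" for x
    using L(2)[OF assms(2)] L(1)[OF assms(2)] by blast
  have P2: "?C = {x \<in> X. eta X le x \<in> down_set (Idl X le) (\<subseteq>)
                 (clover (Idl X le) (\<subseteq>) (hat_step X le F) (eta X le s0))}"
  proof
    show "?C \<subseteq> {x \<in> X. eta X le x \<in> down_set (Idl X le) (\<subseteq>)
                 (clover (Idl X le) (\<subseteq>) (hat_step X le F) (eta X le s0))}"
    proof
      fix x assume x: "x \<in> ?C"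
      have xX: "x \<in> X" using x CX by blast
      obtain M where M: "ideal X le M" "M \<subseteq> ?C" "eta X le x \<subseteq> M"
        "\<forall>N. ideal X le N \<and> N \<subseteq> ?C \<and> eta X le x \<subseteq> N \<and> M \<subseteq> N \<longrightarrow> N = M"
        using L(5)[OF xX etaC[OF x]] by blast
      have HM: "M \<in> Lub (Idl X le) (\<subseteq>) ?CS" using L(4)[OF assms(2) M(1,2)] .
      have "M \<in> clover (Idl X le) (\<subseteq>) (hat_step X le F) (eta X le s0)"
        unfolding clover_def Max_el_def
      proof (intro CollectI conjI ballI impI)
        show "M \<in> Lub (Idl X le) (\<subseteq>) ?CS" using HM .
      next
        fix N assume N: "N \<in> Lub (Idl X le) (\<subseteq>) ?CS" "M \<subseteq> N"
        have "N \<in> Idl X le" "N \<subseteq> ?C" using L(3)[OF assms(2) N(1)] by auto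
        thus "N = M" using M(3,4) N(2) by (auto simp: Idl_def)
      qed
      thus "x \<in> {x \<in> X. eta X le x \<in> down_set (Idl X le) (\<subseteq>)
                 (clover (Idl X le) (\<subseteq>) (hat_step X le F) (eta X le s0))}"
        using xX L(7)[OF xX] M(3) unfolding down_set_def by blast
    qed
  next
    show "{x \<in> X. eta X le x \<in> down_set (Idl X le) (\<subseteq>)
                 (clover (Idl X le) (\<subseteq>) (hat_step X le F) (eta X le s0))} \<subseteq> ?C"
    proof
      fix x assume "x \<in> {x \<in> X. eta X le x \<in> down_set (Idl X le) (\<subseteq>)
                 (clover (Idl X le) (\<subseteq>) (hat_step X le F) (eta X le s0))}"
      then obtain M where x: "x \<in> X" "eta X le x \<subseteq> M"
        and M: "M \<in> Lub (Idl X le) (\<subseteq>) ?CS"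
        unfolding down_set_def clover_def Max_el_def by blast
      have "M \<subseteq> ?C" using L(3)[OF assms(2) M] by blast
      thus "x \<in> ?C" using x L(6)[OF x(1)] by blast
    qed
  qed
  show ?thesis using P1 P2 by simp
qed

end
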